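(* Let $n\ge 2$ be an integer and $\alpha>1$. There exists a weighted graph $G=(\{0,\dots,n-1\},w)$ with $\mathrm{cdim}_\alpha(G)=\binom n2$.
   Context: A weighted graph $G=(V,w)$ assigns a nonnegative weight to each unordered pair of distinct vertices; its edge set is $E=\{e:w(e)>0\}$. For $\emptyset\ne X\subsetneq V$, $\Delta(X)$ is the set of edges with exactly one endpoint in $X$, of weight $w(\Delta(X))$ equal to the sum of their weights; $\lambda$ is the minimum cut weight. For $\alpha\ge1$, an $\alpha$-near-mincut is a cut of weight at most $\alpha\lambda$, $\mathcal{M}_\alpha(G)$ is the set of these, $\chi(S)\in\{0,1\}^{|E|}$ is the characteristic vector of $S$ indexed by $E$, and $\mathrm{cdim}_\alpha(G)=\dim\,\mathrm{span}\{\chi(S):S\in\mathcal{M}_\alpha(G)\}$. *)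

theory Defs
  imports "HOL-Analysis.Analysis" "HOL-Library.Function_Algebras"
begin

text \<open>Unordered pairs are 2-element sets of naturals; the weight
function is zero outside the unordered pairs of V.\<close>

definition wgraph :: "nat \<Rightarrow> (nat set \<Rightarrow> real) \<Rightarrow> bool" where
  "wgraph n w \<longleftrightarrow> (\<forall>e. w e \<ge> 0) \<and>
     (\<forall>e. w e \<noteq> 0 \<longrightarrow> e \<subseteq> {0..<n} \<and> card e = 2)"

definition edges :: "(nat set \<Rightarrow> real) \<Rightarrow> nat set set" where
  "edges w = {e. w e > 0}"

definition cut_edges :: "(nat set \<Rightarrow> real) \<Rightarrow> nat set \<Rightarrow> nat set set" where
  "cut_edges w X = {e \<in> edges w. card (e \<inter> X) = 1}"

definition cut_weight :: "(nat set \<Rightarrow> real) \<Rightarrow> nat set \<Rightarrow> real" where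
  "cut_weight w X = (\<Sum>e\<in>cut_edges w X. w e)"

definition cut_sides :: "nat \<Rightarrow> nat set set" where
  "cut_sides n = {X. X \<noteq> {} \<and> X \<subset> {0..<n}}"

definition mincut :: "nat \<Rightarrow> (nat set \<Rightarrow> real) \<Rightarrow> real" where
  "mincut n w = Min (cut_weight w ` cut_sides n)"

definition near_mincuts :: "nat \<Rightarrow> real \<Rightarrow> (nat set \<Rightarrow> real) \<Rightarrow> nat set set set" where
  "near_mincuts n \<alpha> w =
     {cut_edges w X | X. X \<in> cut_sides n \<and> cut_weight w X \<le> \<alpha> * mincut n w}"

text \<open>Characteristic vector of S, as a real-valued function on unordered pairs
(supported on S \<subseteq> E, hence effectively indexed by E).\<close>
definition charvec :: "nat set set \<Rightarrow> (nat set \<Rightarrow> real)" where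
  "charvec S = (\<lambda>e. if e \<in> S then 1 else 0)"

definition fscale :: "real \<Rightarrow> ('a \<Rightarrow> real) \<Rightarrow> ('a \<Rightarrow> real)" where
  "fscale c f = (\<lambda>x. c * f x)"

lemma vector_space_fscale: "vector_space (fscale :: real \<Rightarrow> ('a \<Rightarrow> real) \<Rightarrow> _)"
  by unfold_locales (auto simp: fscale_def algebra_simps fun_eq_iff)

definition cdim :: "nat \<Rightarrow> real \<Rightarrow> (nat set \<Rightarrow> real) \<Rightarrow> nat" where
  "cdim n \<alpha> w = vector_space.dim fscale (charvec ` near_mincuts n \<alpha> w)"

end

theory Submission
  imports Defs
begin

lemma sum_fun_app: "(\<Sum>x\<in>A. f x) (y::'b) = (\<Sum>x\<in>A. (f x y :: real))"
  by (induction A rule: infinite_finite_induct) auto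

definition pairs :: "nat \<Rightarrow> nat set set" where
  "pairs n = {e. e \<subseteq> {0..<n} \<and> card e = 2}"

lemma finite_pairs: "finite (pairs n)"
  unfolding pairs_def by (rule finite_subset[of _ "Pow {0..<n}"]) auto

lemma card_pairs: "card (pairs n) = n choose 2"
  unfolding pairs_def using n_subsets[of "{0..<n}" 2] by simp

lemma cut_edges_sub: "edges w = pairs n \<Longrightarrow> cut_edges w X \<subseteq> pairs n"
  unfolding cut_edges_def by auto

lemma charvec_cut_int:
  assumes E: "edges w = pairs n" and xy: "x < y"
  shows "charvec (cut_edges w X) {x,y} =
    (if y < n \<and> ((x \<in> X) \<noteq> (y \<in> X)) then 1 else 0)"
proof -
  have "{x,y} \<in> edges w \<longleftrightarrow> y < n" using E xy by (auto simp: pairs_def)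
  moreover have "card ({x,y} \<inter> X) = 1 \<longleftrightarrow> (x \<in> X) \<noteq> (y \<in> X)"
    using xy by (cases "x \<in> X"; cases "y \<in> X") (auto simp: Int_insert_left)
  ultimately show ?thesis unfolding charvec_def cut_edges_def by auto
qed

lemma charvec_cut_out:
  assumes E: "edges w = pairs n" and e: "e \<notin> pairs n"
  shows "charvec (cut_edges w X) e = 0"
  using cut_edges_sub[OF E] e unfolding charvec_def by auto

lemma ite_arith: "(x::nat) < y \<Longrightarrow> a < b \<Longrightarrow>
 (if x = a \<and> y = b then 1 else 0) = -1/2 * (
   (if ((a \<le> x \<and> x \<le> b) \<noteq> (a \<le> y \<and> y \<le> b)) then 1 else 0)
 - (if ((Suc a \<le> x \<and> x \<le> b) \<noteq> (Suc a \<le> y \<and> y \<le> b)) then 1 else 0)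
 - (if ((a \<le> x \<and> x \<le> b - 1) \<noteq> (a \<le> y \<and> y \<le> b - 1)) then 1 else 0)
 + (if ((Suc a \<le> x \<and> x \<le> b - 1) \<noteq> (Suc a \<le> y \<and> y \<le> b - 1)) then 1 else (0::real)))"
  by (simp split: if_split_asm if_split) linarith?

interpretation FV: vector_space "fscale :: real \<Rightarrow> (nat set \<Rightarrow> real) \<Rightarrow> _"
  by (rule vector_space_fscale)

lemma key_identity:
  assumes E: "edges w = pairs n" and ab: "a < b" "b < n"
  shows "charvec {{a,b}} = fscale (-1/2)
     (charvec (cut_edges w {a..b}) - charvec (cut_edges w {Suc a..b})
      - charvec (cut_edges w {a..b-1}) + charvec (cut_edges w {Suc a..b-1}))"
proof
  fix e
  show "charvec {{a,b}} e = fscale (-1/2)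
     (charvec (cut_edges w {a..b}) - charvec (cut_edges w {Suc a..b})
      - charvec (cut_edges w {a..b-1}) + charvec (cut_edges w {Suc a..b-1})) e"
  proof (cases "e \<in> pairs n")
    case False
    have "{a,b} \<in> pairs n" using ab by (auto simp: pairs_def)
    then have "e \<noteq> {a,b}" using False by auto
    then show ?thesis using False charvec_cut_out[OF E False]
      by (simp add: fscale_def charvec_def)
  next
    case True
    then obtain x y where e: "e = {x,y}" "x \<noteq> y" unfolding pairs_def by (auto simp: card_2_iff)
    have "\<exists>x y. e = {x,y} \<and> x < y"
    proof (cases "x < y")
      case True then show ?thesis using e by blast
    next
      case False then have "y < x" using e by auto
      then show ?thesis using e by (metis insert_commute)
    qed
    then obtain x y where e: "e = {x,y}" "x < y" by blast
    have yn: "y < n" using True e by (auto simp: pairs_def)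
    have eq: "({x,y} = {a,b}) \<longleftrightarrow> x = a \<and> y = b" using e ab
      by (metis doubleton_eq_iff less_asym)
    have l: "charvec {{a,b}} {x,y} = (if x = a \<and> y = b then 1 else 0)"
      using eq by (simp add: charvec_def)
    show ?thesis unfolding e(1) fscale_def fun_diff_def plus_fun_apply l
      unfolding charvec_cut_int[OF E e(2)] atLeastAtMost_iff
      using yn ite_arith[OF e(2) ab(1)] by simp
  qed
qed


lemma charvec_single: "charvec {e} x = (if e = x then 1 else 0)"
  by (auto simp: charvec_def)

lemma charvec_single_inj: "inj_on (\<lambda>e. charvec {e}) A"
  by (rule inj_onI) (metis charvec_single one_neq_zero)

lemma cut_edges_empty: "cut_edges w {} = {}"
  by (auto simp: cut_edges_def)

lemma cut_edges_full: "edges w = pairs n \<Longrightarrow> cut_edges w {0..<n} = {}"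
  by (auto simp: cut_edges_def pairs_def Int_absorb2)

lemma charvec_empty: "charvec {} = 0"
  by (auto simp: charvec_def)

lemma charvec_sum: "finite C \<Longrightarrow> charvec C = (\<Sum>e\<in>C. charvec {e})"
proof
  fix x assume "finite C"
  then show "charvec C x = (\<Sum>e\<in>C. charvec {e}) x"
    unfolding sum_fun_app charvec_single by (simp add: charvec_def)
qed

lemma indep_B: "FV.independent ((\<lambda>e. charvec {e}) ` pairs n)"
  unfolding FV.independent_explicit_module
proof (intro allI impI)
  fix t u v assume t: "finite t" "t \<subseteq> (\<lambda>e. charvec {e}) ` pairs n"
    and h: "(\<Sum>v\<in>t. fscale (u v) v) = 0" and v: "v \<in> t"
  obtain e where e: "v = charvec {e}" using v t by auto
  have vals: "v' e = (if v' = v then 1 else 0)" if vt: "v' \<in> t" for v'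
  proof -
    obtain e' where e': "v' = charvec {e'}" using vt t by auto
    have "v' = v \<longleftrightarrow> e' = e" unfolding e' e
      using inj_onD[OF charvec_single_inj[of UNIV]] by auto
    then show ?thesis unfolding e' charvec_single by simp
  qed
  have "0 = (\<Sum>v\<in>t. fscale (u v) v) e" using h by simp
  also have "\<dots> = (\<Sum>v'\<in>t. u v' * (if v' = v then 1 else 0))"
    unfolding sum_fun_app fscale_def by (rule sum.cong) (simp_all add: vals)
  also have "\<dots> = u v" using t v by (simp add: if_distrib cong: if_cong)
  finally show "u v = 0" by simp
qed

lemma cdim_from_intervals:
  assumes E: "edges w = pairs n"
  and near: "\<And>a b. a \<le> b \<Longrightarrow> b < n \<Longrightarrow> {a..b} \<in> cut_sides n \<Longrightarrow>
      cut_weight w {a..b} \<le> \<alpha> * mincut n w"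
  shows "cdim n \<alpha> w = n choose 2"
proof -
  let ?S = "charvec ` near_mincuts n \<alpha> w"
  let ?B = "(\<lambda>e. charvec {e}) ` pairs n"
  have int: "charvec (cut_edges w {a..b}) \<in> FV.span ?S" if b: "b < n" for a b
  proof (cases "b < a")
    case True
    then show ?thesis by (simp add: cut_edges_empty charvec_empty FV.span_zero)
  next
    case False
    show ?thesis
    proof (cases "a = 0 \<and> b = n - 1")
      case True
      then have "{a..b} = {0..<n}" using b by auto
      then show ?thesis by (simp add: cut_edges_full[OF E] charvec_empty FV.span_zero)
    next
      case False2: False
      have "{a..b} \<noteq> {0..<n}"
      proof (cases "a = 0")
        case True
        then have "n - 1 \<notin> {a..b}" using False2 b by auto
        then show ?thesis using b by auto
      next
        case False
        then have "0 \<notin> {a..b}" by auto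
        moreover have "0 \<in> {0..<n}" using b by simp
        ultimately show ?thesis by blast
      qed
      then have "{a..b} \<in> cut_sides n"
        unfolding cut_sides_def using False b by auto
      moreover from this have "cut_weight w {a..b} \<le> \<alpha> * mincut n w"
        using near False b by simp
      ultimately have "cut_edges w {a..b} \<in> near_mincuts n \<alpha> w"
        unfolding near_mincuts_def by blast
      then show ?thesis by (intro FV.span_base) blast
    qed
  qed
  have BS: "?B \<subseteq> FV.span ?S"
  proof
    fix v assume "v \<in> ?B"
    then obtain e where e: "e \<in> pairs n" "v = charvec {e}" by auto
    then obtain x y where xy: "e = {x,y}" "x \<noteq> y" unfolding pairs_def by (auto simp: card_2_iff)
    have "\<exists>a b. e = {a,b} \<and> a < b"
    proof (cases "x < y")
      case True then show ?thesis using xy by blast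
    next
      case False then have "y < x" using xy by auto
      then show ?thesis using xy by (metis insert_commute)
    qed
    then obtain a b where ab: "e = {a,b}" "a < b" by blast
    have bn: "b < n" using e ab by (auto simp: pairs_def)
    show "v \<in> FV.span ?S"
      unfolding e(2) ab(1) key_identity[OF E ab(2) bn]
      apply (rule FV.span_scale)
      apply (rule FV.span_add)
       apply (rule FV.span_diff)
        apply (rule FV.span_diff)
      using bn by (auto intro: int)
  qed
  have SB: "?S \<subseteq> FV.span ?B"
  proof
    fix v assume "v \<in> ?S"
    then obtain X where v: "v = charvec (cut_edges w X)"
      unfolding near_mincuts_def by auto
    have sub: "cut_edges w X \<subseteq> pairs n" by (rule cut_edges_sub[OF E])
    then have fin: "finite (cut_edges w X)" using finite_pairs by (rule finite_subset)
    show "v \<in> FV.span ?B"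
    proof -
      have "charvec {x} \<in> FV.span ?B" if "x \<in> cut_edges w X" for x
        using that sub by (intro FV.span_base) blast
      then have "(\<Sum>e\<in>cut_edges w X. charvec {e}) \<in> FV.span ?B"
        by (rule FV.span_sum)
      then show ?thesis using charvec_sum[OF fin] v by simp
    qed
  qed
  have "FV.span ?S = FV.span ?B" unfolding FV.span_eq using BS SB by (intro conjI)
  then have "FV.dim ?S = FV.dim ?B" by (rule FV.span_eq_dim)
  also have "\<dots> = card ?B" by (rule FV.dim_eq_card_independent[OF indep_B])
  also have "\<dots> = card (pairs n)" by (rule card_image[OF charvec_single_inj])
  finally show ?thesis unfolding cdim_def card_pairs .
qed

definition cyc :: "nat \<Rightarrow> nat \<Rightarrow> nat set" where
  "cyc n i = {i, Suc i mod n}"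

definition wt :: "nat \<Rightarrow> real \<Rightarrow> nat set \<Rightarrow> real" where
  "wt n \<epsilon> e = (if e \<in> pairs n then (if e \<in> cyc n ` {..<n} then 1 else \<epsilon>) else 0)"

lemma wgraph_wt: "\<epsilon> \<ge> 0 \<Longrightarrow> wgraph n (wt n \<epsilon>)"
  unfolding wgraph_def wt_def pairs_def by auto

lemma edges_wt: "\<epsilon> > 0 \<Longrightarrow> edges (wt n \<epsilon>) = pairs n"
  unfolding edges_def wt_def by auto

lemma succ_neq: "n \<ge> 2 \<Longrightarrow> i < n \<Longrightarrow> Suc i mod n \<noteq> i"
  by (simp add: mod_Suc)

lemma succ_swap: "(n::nat) \<ge> 3 \<Longrightarrow> i < n \<Longrightarrow> j < n \<Longrightarrow> i = Suc j mod n \<Longrightarrow> j = Suc i mod n \<Longrightarrow> False"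
  by (metis (no_types, lifting) One_nat_def Suc_eq_plus1 add_numeral_left
    le_add2 mod_Suc mod_less not_less_eq_eq numeral_Bit1 numeral_One
    plus_1_eq_Suc)

lemma cyc_pairs: "n \<ge> 2 \<Longrightarrow> i < n \<Longrightarrow> cyc n i \<in> pairs n"
  unfolding cyc_def pairs_def using succ_neq[of n i] by auto

lemma cyc_cross:
  assumes "n \<ge> 2" "i < n"
  shows "card (cyc n i \<inter> X) = 1 \<longleftrightarrow> (i \<in> X) \<noteq> (Suc i mod n \<in> X)"
  using succ_neq[OF assms] unfolding cyc_def
  by (cases "i \<in> X"; cases "Suc i mod n \<in> X") (auto simp: Int_insert_left)

lemma cycle_closure:
  assumes "P x0" "x0 < n" "\<forall>i<n. P i \<longrightarrow> P (Suc i mod n)" "y < n"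
  shows "P y"
proof -
  have n: "n > 0" using assms(2) by auto
  have all: "P ((x0 + k) mod n)" for k
  proof (induction k)
    case 0 then show ?case using assms(1,2) by simp
  next
    case (Suc k)
    have eq: "(x0 + Suc k) mod n = Suc ((x0 + k) mod n) mod n" by (simp add: mod_Suc_eq)
    have "(x0 + k) mod n < n" using n by simp
    then have "P (Suc ((x0 + k) mod n) mod n)" using Suc.IH assms(3) by blast
    then show ?case unfolding eq .
  qed
  have "(x0 + (n - x0 + y)) mod n = y" using assms(2,4) by simp
  then show ?thesis using all[of "n - x0 + y"] by metis
qed

lemma exists_out:
  assumes X: "X \<in> cut_sides n"
  shows "\<exists>i<n. i \<in> X \<and> Suc i mod n \<notin> X"
proof -
  have ne: "X \<noteq> {}" and sub: "X \<subset> {0..<n}" using X unfolding cut_sides_def by auto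
  obtain x0 where x0: "x0 \<in> X" using ne by blast
  have x0n: "x0 < n" using x0 sub by auto
  have "\<exists>z. z \<in> {0..<n} \<and> z \<notin> X" using sub by blast
  then obtain z where z: "z < n" "z \<notin> X" by auto
  show ?thesis
  proof (rule ccontr)
    assume h: "\<not> (\<exists>i<n. i \<in> X \<and> Suc i mod n \<notin> X)"
    have hh: "\<forall>i<n. i \<in> X \<longrightarrow> Suc i mod n \<in> X" using h by blast
    have "z \<in> X" by (rule cycle_closure[where P="\<lambda>i. i \<in> X", OF x0 x0n hh z(1)])
    then show False using z by blast
  qed
qed
lemma exists_in:
  assumes X: "X \<in> cut_sides n"
  shows "\<exists>i<n. i \<notin> X \<and> Suc i mod n \<in> X"
proof -
  have ne: "X \<noteq> {}" and sub: "X \<subset> {0..<n}" using X unfolding cut_sides_def by auto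
  obtain x0 where x0: "x0 \<in> X" using ne by blast
  have "\<exists>z. z \<in> {0..<n} \<and> z \<notin> X" using sub by blast
  then obtain z where z: "z < n" "z \<notin> X" by auto
  show ?thesis
  proof (rule ccontr)
    assume h: "\<not> (\<exists>i<n. i \<notin> X \<and> Suc i mod n \<in> X)"
    have hh: "\<forall>i<n. i \<notin> X \<longrightarrow> Suc i mod n \<notin> X" using h by blast
    have x0n: "x0 < n" using x0 sub by auto
    have "x0 \<notin> X" by (rule cycle_closure[where P="\<lambda>i. i \<notin> X", OF z(2) z(1) hh x0n])
    then show False using x0 by blast
  qed
qed

lemma finite_cut_edges: "edges w = pairs n \<Longrightarrow> finite (cut_edges w X)"
  by (rule finite_subset[OF cut_edges_sub finite_pairs])

lemma doubleton_swap: "(i::nat) \<noteq> j \<Longrightarrow> {i, si} = {j, sj} \<Longrightarrow> i = sj \<and> si = j"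
  by (metis doubleton_eq_iff)

lemma lower_bound:
  assumes n: "n \<ge> 2" and eps: "\<epsilon> > 0" and X: "X \<in> cut_sides n"
  shows "cut_weight (wt n \<epsilon>) X \<ge> (if n = 2 then 1 else 2)"
proof -
  let ?w = "wt n \<epsilon>"
  obtain i where i: "i < n" "i \<in> X" "Suc i mod n \<notin> X" using exists_out[OF X] by blast
  obtain j where j: "j < n" "j \<notin> X" "Suc j mod n \<in> X" using exists_in[OF X] by blast
  have E: "edges ?w = pairs n" using edges_wt[OF eps] .
  have ci: "cyc n i \<in> cut_edges ?w X"
    unfolding cut_edges_def E using cyc_pairs[OF n i(1)] cyc_cross[OF n i(1)] i by auto
  have cj: "cyc n j \<in> cut_edges ?w X"
    unfolding cut_edges_def E using cyc_pairs[OF n j(1)] cyc_cross[OF n j(1)] j by auto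
  have w1: "?w (cyc n k) = 1" if "k < n" for k
    unfolding wt_def using cyc_pairs[OF n that] that by auto
  have nonneg: "\<And>e. ?w e \<ge> 0" unfolding wt_def using eps by auto
  have fin: "finite (cut_edges ?w X)" by (rule finite_cut_edges[OF E])
  show ?thesis
  proof (cases "n = 2")
    case True
    have "(\<Sum>e\<in>{cyc n i}. ?w e) \<le> cut_weight ?w X"
      unfolding cut_weight_def using ci fin nonneg by (intro sum_mono2) auto
    then show ?thesis using w1[OF i(1)] True by simp
  next
    case False
    have neq: "cyc n i \<noteq> cyc n j"
    proof
      assume eq: "cyc n i = cyc n j"
      have "i \<noteq> j" using i j by auto
      then have h: "i = Suc j mod n \<and> Suc i mod n = j"
        by (rule doubleton_swap[OF _ eq[unfolded cyc_def]])
      have n3: "n \<ge> 3" using n False by auto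
      show False using succ_swap[OF n3 i(1) j(1) conjunct1[OF h] conjunct2[OF h, symmetric]] .
    qed
    have "(\<Sum>e\<in>{cyc n i, cyc n j}. ?w e) \<le> cut_weight ?w X"
      unfolding cut_weight_def using ci cj fin nonneg by (intro sum_mono2) auto
    then show ?thesis using w1[OF i(1)] w1[OF j(1)] neq False by simp
  qed
qed


lemma interval_cross:
  assumes "(n::nat) \<ge> 2" "a \<le> b" "b < n" "i < n" "(i \<in> {a..b}) \<noteq> (Suc i mod n \<in> {a..b})"
  shows "i = (a + n - 1) mod n \<or> i = b"
proof (cases "Suc i < n")
  case True
  then have "Suc i mod n = Suc i" by simp
  then have "i = b \<or> Suc i = a" using assms(5) by auto
  moreover have "(a + n - 1) mod n = i" if h: "Suc i = a"
  proof -
    have "a + n - 1 = i + n" using h by simp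
    then show ?thesis using assms(4) by simp
  qed
  ultimately show ?thesis by auto
next
  case False
  then have si: "Suc i = n" using assms(4) by simp
  then have i: "i = n - 1" "Suc i mod n = 0" by auto
  show ?thesis
  proof (cases "a = 0")
    case True
    then show ?thesis using i assms by simp
  next
    case False
    then show ?thesis using i assms by auto
  qed
qed

lemma card_two_le: "card {x, y} \<le> 2"
  by (cases "x = y") auto

lemma upper_bound:
  assumes n: "n \<ge> 2" and eps: "\<epsilon> > 0" and ab: "a \<le> b" "b < n"
  shows "cut_weight (wt n \<epsilon>) {a..b} \<le> (if n = 2 then 1 else 2) + \<epsilon> * 2^n"
proof -
  let ?w = "wt n \<epsilon>"
  let ?C = "cut_edges ?w {a..b}"
  let ?Cy = "cyc n ` {..<n}"
  have E: "edges ?w = pairs n" using edges_wt[OF eps] .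
  have sub: "?C \<subseteq> pairs n" by (rule cut_edges_sub[OF E])
  have fin: "finite ?C" by (rule finite_cut_edges[OF E])
  have split: "cut_weight ?w {a..b} = (\<Sum>e\<in>?C \<inter> ?Cy. ?w e) + (\<Sum>e\<in>?C - ?Cy. ?w e)"
    unfolding cut_weight_def by (rule sum.Int_Diff[OF fin])
  have s1: "(\<Sum>e\<in>?C \<inter> ?Cy. ?w e) = real (card (?C \<inter> ?Cy))"
  proof -
    have "(\<Sum>e\<in>?C \<inter> ?Cy. ?w e) = (\<Sum>e\<in>?C \<inter> ?Cy. 1)"
      by (rule sum.cong) (use sub in \<open>auto simp: wt_def\<close>)
    then show ?thesis by simp
  qed
  have s2: "(\<Sum>e\<in>?C - ?Cy. ?w e) = \<epsilon> * real (card (?C - ?Cy))"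
  proof -
    have "(\<Sum>e\<in>?C - ?Cy. ?w e) = (\<Sum>e\<in>?C - ?Cy. \<epsilon>)"
      by (rule sum.cong) (use sub in \<open>auto simp: wt_def\<close>)
    then show ?thesis by simp
  qed
  have c2: "card (?C - ?Cy) \<le> 2^n"
  proof -
    have "?C - ?Cy \<subseteq> Pow {0..<n}" using sub unfolding pairs_def by auto
    then have "card (?C - ?Cy) \<le> card (Pow {0..<n})" by (rule card_mono[rotated]) simp
    then show ?thesis by (simp add: card_Pow)
  qed
  have c1: "card (?C \<inter> ?Cy) \<le> (if n = 2 then 1 else 2)"
  proof (cases "n = 2")
    case True
    have "cyc n i = {0,1}" if "i < n" for i
    proof -
      have "i = 0 \<or> i = 1" using that True by auto
      then show ?thesis using True by (auto simp: cyc_def)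
    qed
    then have "?C \<inter> ?Cy \<subseteq> {{0,1}}" by auto
    then have "card (?C \<inter> ?Cy) \<le> card {{0::nat,1}}" by (rule card_mono[rotated]) simp
    then show ?thesis using True by simp
  next
    case False
    have "?C \<inter> ?Cy \<subseteq> cyc n ` {(a + n - 1) mod n, b}"
    proof
      fix e assume e: "e \<in> ?C \<inter> ?Cy"
      then obtain i where i: "i < n" "e = cyc n i" by auto
      have "card (cyc n i \<inter> {a..b}) = 1" using e i unfolding cut_edges_def by auto
      then have "(i \<in> {a..b}) \<noteq> (Suc i mod n \<in> {a..b})" using cyc_cross[OF n i(1)] by simp
      then have "i = (a + n - 1) mod n \<or> i = b" by (rule interval_cross[OF n ab i(1)])
      then show "e \<in> cyc n ` {(a + n - 1) mod n, b}" using i by auto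
    qed
    then have "card (?C \<inter> ?Cy) \<le> card (cyc n ` {(a + n - 1) mod n, b})"
      by (rule card_mono[rotated]) simp
    also have "\<dots> \<le> card {(a + n - 1) mod n, b}" by (rule card_image_le) simp
    also have "\<dots> \<le> 2" by (rule card_two_le)
    finally show ?thesis using False by simp
  qed
  have r2: "real (card (?C - ?Cy)) \<le> 2^n"
  proof -
    have "real (card (?C - ?Cy)) \<le> real (2^n)" using c2 by (rule of_nat_mono)
    then show ?thesis by simp
  qed
  have r1: "real (card (?C \<inter> ?Cy)) \<le> (if n = 2 then 1 else 2)"
  proof -
    have "real (card (?C \<inter> ?Cy)) \<le> real (if n = 2 then 1 else 2)" using c1 by (rule of_nat_mono)
    then show ?thesis by (simp split: if_splits)
  qed
  have "\<epsilon> * real (card (?C - ?Cy)) \<le> \<epsilon> * 2^n"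
    using r2 eps by (intro mult_left_mono) auto
  then show ?thesis unfolding split s1 s2 using r1 by linarith
qed

theorem mainTheorem18:
  fixes n :: nat and \<alpha> :: real
  assumes "n \<ge> 2" and "\<alpha> > 1"
  shows "\<exists>w. wgraph n w \<and> cdim n \<alpha> w = n choose 2"
proof -
  have n: "n \<ge> 2" using assms(1) .
  define \<epsilon> :: real where "\<epsilon> = (\<alpha> - 1) / 2^n"
  have eps: "\<epsilon> > 0" using assms(2) by (simp add: \<epsilon>_def)
  have epsn: "\<epsilon> * 2^n = \<alpha> - 1" by (simp add: \<epsilon>_def)
  define L :: real where "L = (if n = 2 then 1 else 2)"
  have L1: "L \<ge> 1" by (simp add: L_def)
  let ?w = "wt n \<epsilon>"
  have E: "edges ?w = pairs n" using edges_wt[OF eps] .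
  have finS: "finite (cut_sides n)"
    by (rule finite_subset[of _ "Pow {0..<n}"]) (auto simp: cut_sides_def)
  have ne: "{0} \<in> cut_sides n"
  proof -
    have "1 \<in> {0..<n}" using n by simp
    moreover have "(1::nat) \<notin> {0}" by simp
    ultimately have "{0} \<noteq> {0..<n}" by blast
    moreover have "{0} \<subseteq> {0..<n}" using n by simp
    ultimately show ?thesis unfolding cut_sides_def by auto
  qed
  have mc: "L \<le> mincut n ?w"
    unfolding mincut_def L_def
  proof (subst Min_ge_iff)
    show "finite (cut_weight ?w ` cut_sides n)" using finS by simp
    show "cut_weight ?w ` cut_sides n \<noteq> {}" using ne by blast
    show "\<forall>a\<in>cut_weight ?w ` cut_sides n. (if n = 2 then 1 else 2) \<le> a"
      using lower_bound[OF n eps] by blast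
  qed
  have "cdim n \<alpha> ?w = n choose 2"
  proof (rule cdim_from_intervals[OF E])
    fix a b assume ab: "a \<le> b" "b < n"
    have "cut_weight ?w {a..b} \<le> L + (\<alpha> - 1)"
      using upper_bound[OF n eps ab] epsn unfolding L_def by simp
    also have "\<dots> \<le> \<alpha> * L"
    proof -
      have "0 \<le> (\<alpha> - 1) * (L - 1)" using assms(2) L1 by simp
      then show ?thesis by (simp add: algebra_simps)
    qed
    also have "\<dots> \<le> \<alpha> * mincut n ?w"
      using mc assms(2) by (intro mult_left_mono) auto
    finally show "cut_weight ?w {a..b} \<le> \<alpha> * mincut n ?w" .
  qed
  moreover have "wgraph n ?w" using eps by (intro wgraph_wt) simp
  ultimately show ?thesis by blast
qed

end
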